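(* For every $j\in\{1,\dots,D\}$, $$ r_{n,j}=\frac{D^{s-1}(3Dn+1)!}{n!^{3D}}\sum_{m=1}^D\xi^{-mj}r_{n,m}^*, $$ where $$ r_{n,m}^* =\xi^m\int\!\cdots\!\int\limits_{[0,1]^{s+1}} \frac{\prod_{i=0}^sx_i^{Dn}(1-x_i^D)^n\,\d x_i}{(1-\xi^mx_0\dotsb x_s)^{3Dn+2}} =\int_0^{\xi^m}\!\!\int\!\cdots\!\int\limits_{[0,1]^s} \frac{\prod_{i=0}^sx_i^{Dn}(1-x_i^D)^n\,\d x_i}{(1-x_0\dotsb x_s)^{3Dn+2}} $$ and $\xi=\xi_D$ denotes a primitive root of unity of degree $D$.
   Context: Let $s$ and $D$ be positive integers with $s\ge 3D-1$, and let $n$ be a positive even integer. Let $\zeta(s,\alpha)=\sum_{k=0}^\infty (k+\alpha)^{-s}$ denote the Hurwitz zeta function. For $j\in\{1,\dots,D\}$ define $$ r_{n,j} = \sum_{m=1}^\infty R_n\bigg(m+\frac{j}{D}\bigg), \qquad\text{where}\quad R_n(t) = D^{3Dn} n!^{s+1-3D} \, \frac{ \prod_{l=0}^{3Dn} (t-n+l/D)}{ \prod_{l=0}^n (t+l)^{s+1}}. $$ These are linear forms $r_{n,j}=a_{0,j}+\sum_{2\le i\le s,\ i\equiv s \ (\mathrm{mod}\ 2)} a_i\,\zeta(i,j/D)$ with rational coefficients. *)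

theory Defs
  imports "HOL-Analysis.Analysis" "HOL-Complex_Analysis.Complex_Analysis"
begin

text \<open>The rational function R_n(t) (depending on parameters s, D, n).
  The exponent s+1-3D is nonnegative under the standing hypothesis s \<ge> 3D-1.\<close>
definition R_fun :: "nat \<Rightarrow> nat \<Rightarrow> nat \<Rightarrow> real \<Rightarrow> real" where
  "R_fun s D n t =
     real D ^ (3*D*n) * fact n ^ (s + 1 - 3*D)
     * (\<Prod>l\<in>{0..3*D*n}. t - real n + real l / real D)
     / (\<Prod>l\<in>{0..n}. (t + real l) ^ (s+1))"

definition r_lin :: "nat \<Rightarrow> nat \<Rightarrow> nat \<Rightarrow> nat \<Rightarrow> real" where
  "r_lin s D n j = (\<Sum>m. R_fun s D n (real (Suc m) + real j / real D))"

definition weight :: "nat \<Rightarrow> nat \<Rightarrow> nat set \<Rightarrow> (nat \<Rightarrow> real) \<Rightarrow> real" where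
  "weight D n I x = (\<Prod>i\<in>I. x i ^ (D*n) * (1 - x i ^ D) ^ n)"

definition r_star :: "nat \<Rightarrow> nat \<Rightarrow> nat \<Rightarrow> complex \<Rightarrow> nat \<Rightarrow> complex" where
  "r_star s D n \<xi> m = \<xi> ^ m *
     (LINT x | (\<Pi>\<^sub>M i\<in>{..s}. restrict_space lborel {0..1::real}).
        complex_of_real (weight D n {..s} x)
        / (1 - \<xi> ^ m * complex_of_real (\<Prod>i\<in>{..s}. x i)) ^ (3*D*n+2))"

definition r_star_contour :: "nat \<Rightarrow> nat \<Rightarrow> nat \<Rightarrow> complex \<Rightarrow> nat \<Rightarrow> complex" where
  "r_star_contour s D n \<xi> m = contour_integral (linepath 0 (\<xi> ^ m))
     (\<lambda>z. LINT x | (\<Pi>\<^sub>M i\<in>{1..s}. restrict_space lborel {0..1::real}).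
        z ^ (D*n) * (1 - z ^ D) ^ n * complex_of_real (weight D n {1..s} x)
        / (1 - z * complex_of_real (\<Prod>i\<in>{1..s}. x i)) ^ (3*D*n+2))"

end

theory Submission
  imports Defs
begin


lemma choose_sum_aux: "(\<Sum>i\<le>k. (N+i) choose i) = (k + Suc N) choose Suc N"
proof -
  have "(\<Sum>i\<le>k. (N+i) choose i) = Suc (N+k) choose k" by (rule sum_choose_lower)
  also have "\<dots> = (k + Suc N) choose Suc N"
    using binomial_symmetric[of k "Suc (N+k)"] by (simp add: add.commute)
  finally show ?thesis .
qed

lemma choose_sym_aux: "(i+N) choose N = (N+i) choose i"
  using binomial_symmetric[of i "N+i"] by (simp add: add.commute)



lemma negbin_sums_real:
  fixes u :: real
  assumes "norm u < 1"
  shows "(\<lambda>k. of_nat ((k+N) choose N) * u^k) sums (1 / (1-u)^(N+1))"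
  using assms
proof (induction N arbitrary: u)
  case 0
  then show ?case using geometric_sums[OF 0] by simp
next
  case (Suc N)
  have a: "summable (\<lambda>k. norm (of_nat ((k+N) choose N) * u^k))"
  proof -
    have "(\<lambda>k. of_nat ((k+N) choose N) * norm u^k) sums (1 / (1-norm u)^(N+1))"
      using Suc.IH[of "norm u"] Suc.prems by simp
    then show ?thesis by (simp add: norm_mult norm_power abs_mult power_abs sums_summable del: of_nat_add)
  qed
  have b: "summable (\<lambda>k. norm (u^k))"
    using Suc.prems by (simp add: norm_power power_abs summable_geometric)
  have "(\<lambda>k. \<Sum>i\<le>k. (of_nat ((i+N) choose N) * u^i) * u^(k-i)) sums
        ((\<Sum>k. of_nat ((k+N) choose N) * u^k) * (\<Sum>k. u^k))"
    by (rule Cauchy_product_sums[OF a b])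
  moreover have "(\<Sum>k. of_nat ((k+N) choose N) * u^k) = 1 / (1-u)^(N+1)"
    using Suc.IH[OF Suc.prems] by (simp add: sums_iff)
  moreover have "(\<Sum>k. u^k) = 1 / (1-u)"
    using geometric_sums[OF Suc.prems] by (simp add: sums_iff)
  moreover have "(\<Sum>i\<le>k. (of_nat ((i+N) choose N) * u^i) * u^(k-i)) = of_nat ((k + Suc N) choose Suc N) * u^k" for k
  proof -
    have "(\<Sum>i\<le>k. (of_nat ((i+N) choose N) * u^i) * u^(k-i)) = (\<Sum>i\<le>k. of_nat ((N+i) choose i) * u^k)"
    proof (intro sum.cong refl)
      fix i assume "i \<in> {..k}"
      then have "u^i * u^(k-i) = u^k" by (simp add: power_add[symmetric])
      then show "(of_nat ((i+N) choose N) * u^i) * u^(k-i) = of_nat ((N+i) choose i) * u^k"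
        by (simp add: choose_sym_aux mult.assoc)
    qed
    also have "\<dots> = of_nat (\<Sum>i\<le>k. (N+i) choose i) * u^k"
      by (simp add: sum_distrib_right)
    finally show ?thesis by (simp only: choose_sum_aux)
  qed
  ultimately have "(\<lambda>k. of_nat ((k + Suc N) choose Suc N) * u^k) sums (1 / (1-u)^(N+1) * (1 / (1-u)))"
    by (simp only:)
  moreover have "1 / (1-u)^(N+1) * (1 / (1-u)) = 1 / (1-u)^(Suc N + 1)"
    by (simp add: power_Suc2 divide_inverse inverse_mult_distrib del: power_Suc)
  ultimately show ?case by (simp only:)
qed
lemma negbin_sums:
  fixes u :: "'a::{real_normed_field,banach}"
  assumes "norm u < 1"
  shows "(\<lambda>k. of_nat ((k+N) choose N) * u^k) sums (1 / (1-u)^(N+1))"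
  using assms
proof (induction N arbitrary: u)
  case 0
  then show ?case using geometric_sums[OF 0] by simp
next
  case (Suc N)
  have a: "summable (\<lambda>k. norm (of_nat ((k+N) choose N) * u^k))"
  proof -
    have "(\<lambda>k. of_nat ((k+N) choose N) * norm u^k) sums (1 / (1-norm u)^(N+1))"
      using negbin_sums_real[of "norm u" N] Suc.prems by simp
    then show ?thesis by (simp add: norm_mult norm_power abs_mult power_abs sums_summable del: of_nat_add)
  qed
  have b: "summable (\<lambda>k. norm (u^k))"
    using Suc.prems by (simp add: norm_power power_abs summable_geometric)
  have "(\<lambda>k. \<Sum>i\<le>k. (of_nat ((i+N) choose N) * u^i) * u^(k-i)) sums
        ((\<Sum>k. of_nat ((k+N) choose N) * u^k) * (\<Sum>k. u^k))"
    by (rule Cauchy_product_sums[OF a b])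
  moreover have "(\<Sum>k. of_nat ((k+N) choose N) * u^k) = 1 / (1-u)^(N+1)"
    using Suc.IH[OF Suc.prems] by (simp add: sums_iff)
  moreover have "(\<Sum>k. u^k) = 1 / (1-u)"
    using geometric_sums[OF Suc.prems] by (simp add: sums_iff)
  moreover have "(\<Sum>i\<le>k. (of_nat ((i+N) choose N) * u^i) * u^(k-i)) = of_nat ((k + Suc N) choose Suc N) * u^k" for k
  proof -
    have "(\<Sum>i\<le>k. (of_nat ((i+N) choose N) * u^i) * u^(k-i)) = (\<Sum>i\<le>k. of_nat ((N+i) choose i) * u^k)"
    proof (intro sum.cong refl)
      fix i assume "i \<in> {..k}"
      then have "u^i * u^(k-i) = u^k" by (simp add: power_add[symmetric])
      then show "(of_nat ((i+N) choose N) * u^i) * u^(k-i) = of_nat ((N+i) choose i) * u^k"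
        by (simp add: choose_sym_aux mult.assoc)
    qed
    also have "\<dots> = of_nat (\<Sum>i\<le>k. (N+i) choose i) * u^k"
      by (simp add: sum_distrib_right)
    finally show ?thesis by (simp only: choose_sum_aux)
  qed
  ultimately have "(\<lambda>k. of_nat ((k + Suc N) choose Suc N) * u^k) sums (1 / (1-u)^(N+1) * (1 / (1-u)))"
    by (simp only:)
  moreover have "1 / (1-u)^(N+1) * (1 / (1-u)) = 1 / (1-u)^(Suc N + 1)"
    by (simp add: power_Suc2 divide_inverse inverse_mult_distrib del: power_Suc)
  ultimately show ?case by (simp only:)
qed


definition PF :: "nat \<Rightarrow> real \<Rightarrow> real" where
  "PF n a = (\<Sum>i\<le>n. real (n choose i) * (-1)^i / (a + real i))"

lemma PF_step: "a > 0 \<Longrightarrow> PF (Suc n) a = PF n a - PF n (a+1)"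
proof -
  assume a: "a > 0"
  have "PF (Suc n) a = 1/a + (\<Sum>i\<le>n. real (Suc n choose Suc i) * (-1)^Suc i / (a + real (Suc i)))"
    unfolding PF_def by (subst sum.atMost_Suc_shift) simp
  also have "\<dots> = 1/a + (\<Sum>i\<le>n. real (n choose Suc i) * (-1)^Suc i / (a + real (Suc i)))
       + (\<Sum>i\<le>n. real (n choose i) * (-1)^Suc i / (a + real (Suc i)))"
    by (auto intro!: sum.cong simp: sum.distrib[symmetric] algebra_simps simp flip: add_divide_distrib diff_divide_distrib divide_minus_left)
  also have "1/a + (\<Sum>i\<le>n. real (n choose Suc i) * (-1)^Suc i / (a + real (Suc i))) = PF n a"
  proof -
    have "PF n a = (\<Sum>i\<le>Suc n. real (n choose i) * (-1)^i / (a + real i))"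
      unfolding PF_def by simp
    also have "\<dots> = 1/a + (\<Sum>i\<le>n. real (n choose Suc i) * (-1)^Suc i / (a + real (Suc i)))"
      by (subst sum.atMost_Suc_shift) simp
    finally show ?thesis by simp
  qed
  also have "(\<Sum>i\<le>n. real (n choose i) * (-1)^Suc i / (a + real (Suc i))) = - PF n (a+1)"
    unfolding PF_def by (simp add: sum_negf[symmetric] add_ac)
  finally show ?thesis by simp
qed

lemma PF_closed: "a > 0 \<Longrightarrow> PF n a = fact n / pochhammer a (Suc n)"
proof (induction n arbitrary: a)
  case 0
  then show ?case by (simp add: PF_def pochhammer_rec)
next
  case (Suc n)
  have p1: "pochhammer a (Suc n) > 0" "pochhammer (a+1) (Suc n) > 0"
    using Suc.prems by (auto intro!: pochhammer_pos)
  have e1: "pochhammer a (Suc (Suc n)) = a * pochhammer (a+1) (Suc n)"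
    by (rule pochhammer_rec)
  have e2: "pochhammer a (Suc (Suc n)) = (a + real (Suc n)) * pochhammer a (Suc n)"
    by (rule pochhammer_rec')
  have "PF (Suc n) a = fact n / pochhammer a (Suc n) - fact n / pochhammer (a+1) (Suc n)"
    using PF_step[OF Suc.prems] Suc.IH[of a] Suc.IH[of "a+1"] Suc.prems by simp
  also have "\<dots> = fact (Suc n) / pochhammer a (Suc (Suc n))"
  proof -
    have "fact n / pochhammer a (Suc n) = fact n * (a + real (Suc n)) / pochhammer a (Suc (Suc n))"
    proof -
      have "a + real (Suc n) \<noteq> 0" using Suc.prems by simp
      then show ?thesis unfolding e2 by simp
    qed
    moreover have "fact n / pochhammer (a+1) (Suc n) = fact n * a / pochhammer a (Suc (Suc n))"
    proof -
      have "a \<noteq> 0" using Suc.prems by simp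
      then show ?thesis unfolding e1 by (simp add: mult.commute)
    qed
    ultimately show ?thesis by (simp add: diff_divide_distrib[symmetric] algebra_simps)
  qed
  finally show ?case .
qed


abbreviation M1 :: "real measure" where "M1 \<equiv> restrict_space lborel {0..1::real}"

lemma M1_finite: "finite_measure M1"
  by (rule finite_measureI) (simp add: emeasure_restrict_space space_restrict_space)

lemma M1_psf: "product_sigma_finite (\<lambda>i::nat. M1)"
  unfolding product_sigma_finite_def
  using M1_finite finite_measure.axioms(1) by blast

lemma M1_integral_power: "(LINT y|M1. y^p) = 1 / (real p + 1)"
  by (subst integral_restrict_space) (auto simp: integral_power mult.commute)

lemma M1_integrable_cont:
  fixes f :: "real \<Rightarrow> 'a::{banach,second_countable_topology}"
  assumes "continuous_on {0..1} f"
  shows "integrable M1 f"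
proof -
  have "set_integrable lborel {0..1} f" by (rule borel_integrable_atLeastAtMost'[OF assms])
  then show ?thesis unfolding set_integrable_def by (subst integrable_restrict_space) auto
qed




definition gk :: "nat \<Rightarrow> nat \<Rightarrow> nat \<Rightarrow> real \<Rightarrow> real" where
  "gk D n k y = y^(D*n+k) * (1 - y^D)^n"

definition Jk :: "nat \<Rightarrow> nat \<Rightarrow> nat \<Rightarrow> real" where
  "Jk D n k = (LINT y|M1. gk D n k y)"

lemma gk_expand: "gk D n k y = (\<Sum>i\<le>n. real (n choose i) * (-1)^i * y^(D*n+k+D*i))"
proof -
  have "(1 - y^D)^n = (-(y^D) + 1)^n" by simp
  also have "\<dots> = (\<Sum>i\<le>n. real (n choose i) * (-(y^D))^i)"
    by (subst binomial_ring) simp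
  finally have e: "(1 - y^D)^n = (\<Sum>i\<le>n. real (n choose i) * (-(y^D))^i)" .
  have t: "y^(D*n+k) * (real (n choose i) * (-(y^D))^i) = real (n choose i) * (-1)^i * y^(D*n+k+D*i)" for i
  proof -
    have "(-(y^D))^i = (-1)^i * y^(D*i)" by (simp add: power_mult power_mult_distrib[symmetric])
    then show ?thesis by (simp add: power_add)
  qed
  show ?thesis unfolding gk_def e sum_distrib_left by (intro sum.cong refl) (rule t)
qed

lemma gk_cont: "continuous_on {0..1} (gk D n k)"
  unfolding gk_def by (intro continuous_intros)

lemma gk_integrable: "integrable M1 (gk D n k)"
  by (rule M1_integrable_cont[OF gk_cont])

lemma gk_nonneg: "y \<in> {0..1} \<Longrightarrow> gk D n k y \<ge> 0"
  unfolding gk_def by (auto intro!: mult_nonneg_nonneg simp: power_le_one)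

lemma Jk_closed:
  assumes D: "D > 0"
  shows "Jk D n k = fact n / (real D * pochhammer (real (D*n+k+1) / real D) (Suc n))"
proof -
  let ?a = "real (D*n+k+1) / real D"
  have a: "?a > 0" using D by (intro divide_pos_pos) (simp_all add: add_pos_nonneg)
  have "Jk D n k = (\<Sum>i\<le>n. LINT y|M1. real (n choose i) * (-1)^i * y^(D*n+k+D*i))"
    unfolding Jk_def gk_expand
    by (rule Bochner_Integration.integral_sum[where f="\<lambda>i y. real (n choose i) * (-1)^i * y^(D*n+k+D*i)"]) (auto intro!: M1_integrable_cont continuous_intros)
  also have "\<dots> = (\<Sum>i\<le>n. real (n choose i) * (-1)^i * (1 / (real (D*n+k+D*i) + 1)))"
    by (simp add: M1_integral_power)
  also have "\<dots> = (\<Sum>i\<le>n. real (n choose i) * (-1)^i / (?a + real i)) / real D"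
    unfolding sum_divide_distrib
  proof (intro sum.cong refl)
    fix i
    have "real (D*n+k+D*i) + 1 = real D * (?a + real i)"
      using D by (simp add: field_simps)
    then show "real (n choose i) * (-1)^i * (1 / (real (D*n+k+D*i) + 1)) =
          real (n choose i) * (-1)^i / (?a + real i) / real D"
      by simp
  qed
  also have "\<dots> = PF n ?a / real D" unfolding PF_def ..
  also have "\<dots> = fact n / (real D * pochhammer ?a (Suc n))"
    using PF_closed[OF a] by simp
  finally show ?thesis .
qed


abbreviation PP :: "nat set \<Rightarrow> (nat \<Rightarrow> real) measure" where
  "PP I \<equiv> Pi\<^sub>M I (\<lambda>i. M1)"

lemma space_PP: "space (PP I) = PiE I (\<lambda>_. {0..1})"
  by (simp add: space_PiM space_restrict_space)

lemma PP_prod_integrable: "finite I \<Longrightarrow> integrable (PP I) (\<lambda>x. \<Prod>i\<in>I. gk D n k (x i))"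
  by (rule product_sigma_finite.product_integrable_prod[OF M1_psf]) (auto intro: gk_integrable)

lemma PP_prod_integral: "finite I \<Longrightarrow> (LINT x|PP I. (\<Prod>i\<in>I. gk D n k (x i))) = Jk D n k ^ card I"
  by (subst product_sigma_finite.product_integral_prod[OF M1_psf]) (auto intro: gk_integrable simp: Jk_def)

lemma prod_le_member:
  fixes x :: "nat \<Rightarrow> real"
  assumes "finite I" "i \<in> I" "\<And>j. j \<in> I \<Longrightarrow> x j \<in> {0..1}"
  shows "(\<Prod>j\<in>I. x j) \<le> x i"
proof -
  have "(\<Prod>j\<in>I. x j) = x i * (\<Prod>j\<in>I-{i}. x j)"
    using assms by (simp add: prod.remove)
  also have "\<dots> \<le> x i * 1"
    using assms by (intro mult_left_mono prod_le_1) auto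
  finally show ?thesis by simp
qed

lemma weight_prod_gk:
  "weight D n I x * (\<Prod>i\<in>I. x i) ^ k = (\<Prod>i\<in>I. gk D n k (x i))"
proof -
  have "(\<Prod>i\<in>I. x i) ^ k = (\<Prod>i\<in>I. x i ^ k)" by (rule prod_power_distrib)
  then show ?thesis unfolding weight_def gk_def
    by (simp add: prod.distrib[symmetric] power_add mult_ac)
qed



lemma Jk_nonneg: "Jk D n k \<ge> 0"
  unfolding Jk_def by (rule integral_nonneg_AE) (auto intro!: AE_I2 gk_nonneg simp: space_restrict_space)

lemma series_integral:
  fixes w :: complex
  assumes fin: "finite I" and ne: "I \<noteq> {}" and n: "n > 0" and w: "norm w \<le> 1"
    and summ: "summable (\<lambda>k. real ((k+N) choose N) * Jk D n k ^ card I)"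
  defines "F \<equiv> \<lambda>x. complex_of_real (weight D n I x) / (1 - w * complex_of_real (\<Prod>i\<in>I. x i)) ^ Suc N"
  shows "integrable (PP I) F"
    and "(LINT x|PP I. F x) = (\<Sum>k. of_nat ((k+N) choose N) * w^k * complex_of_real (Jk D n k ^ card I))"
proof -
  define f where "f = (\<lambda>k x. of_nat ((k+N) choose N) * w^k * complex_of_real (\<Prod>i\<in>I. gk D n k (x i)))"
  have f_alt: "f k x = complex_of_real (weight D n I x) * (of_nat ((k+N) choose N) * (w * complex_of_real (\<Prod>i\<in>I. x i))^k)" for k x
  proof -
    have "complex_of_real (\<Prod>i\<in>I. gk D n k (x i)) = complex_of_real (weight D n I x) * complex_of_real (\<Prod>i\<in>I. x i) ^ k"
      by (simp flip: weight_prod_gk)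
    then show ?thesis unfolding f_def by (simp add: power_mult_distrib mult_ac)
  qed
  have pt: "(\<lambda>k. f k x) sums F x \<and> summable (\<lambda>k. norm (f k x))" if x: "x \<in> space (PP I)" for x
  proof (cases "weight D n I x = 0")
    case True
    then show ?thesis unfolding f_alt F_def by simp
  next
    case False
    have x01: "x i \<in> {0..1}" if "i \<in> I" for i using x that by (auto simp: space_PP)
    have xl1: "x i < 1" if "i \<in> I" for i
    proof -
      have "x i \<noteq> 1"
      proof
        assume "x i = 1"
        then have "weight D n I x = 0" unfolding weight_def using that fin n
          by (intro prod_zero) (auto intro!: bexI[of _ i])
        then show False using False by simp
      qed
      then show ?thesis using x01[OF that] by simp
    qed
    obtain i0 where i0: "i0 \<in> I" using ne by auto
    let ?p = "\<Prod>i\<in>I. x i"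
    have p0: "?p \<ge> 0" using x01 by (intro prod_nonneg) auto
    have "?p \<le> x i0" by (rule prod_le_member[OF fin i0]) (rule x01)
    then have p1: "?p < 1" using xl1[OF i0] by simp
    let ?u = "w * complex_of_real ?p"
    have nu: "norm ?u < 1"
    proof -
      have "norm ?u = norm w * ?p" using p0 by (simp only: norm_mult norm_of_real abs_of_nonneg)
      also have "\<dots> \<le> 1 * ?p" using w p0 by (intro mult_right_mono) auto
      finally show ?thesis using p1 by simp
    qed
    have s1: "(\<lambda>k. complex_of_real (weight D n I x) * (of_nat ((k+N) choose N) * ?u^k)) sums
              (complex_of_real (weight D n I x) * (1 / (1 - ?u)^(N+1)))"
      by (intro sums_mult negbin_sums nu)
    have s2: "summable (\<lambda>k. norm (complex_of_real (weight D n I x)) * (real ((k+N) choose N) * norm ?u^k))"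
      by (intro summable_mult sums_summable[OF negbin_sums_real]) (use nu in simp)
    show ?thesis
    proof
      show "(\<lambda>k. f k x) sums F x" using s1 unfolding f_alt F_def by simp
      show "summable (\<lambda>k. norm (f k x))" using s2 unfolding f_alt by (simp add: norm_mult norm_power)
    qed
  qed
  have fint: "integrable (PP I) (f k)" for k
    unfolding f_def by (intro integrable_mult_right integrable_of_real PP_prod_integrable fin)
  have normint: "(LINT x|PP I. norm (f k x)) = real ((k+N) choose N) * norm w ^ k * Jk D n k ^ card I" for k
  proof -
    have "(LINT x|PP I. norm (f k x)) = (LINT x|PP I. real ((k+N) choose N) * norm w ^ k * (\<Prod>i\<in>I. gk D n k (x i)))"
    proof (intro Bochner_Integration.integral_cong refl)
      fix x assume x: "x \<in> space (PP I)"
      have "(\<Prod>i\<in>I. gk D n k (x i)) \<ge> 0"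
        using x by (intro prod_nonneg gk_nonneg) (auto simp: space_PP)
      then show "norm (f k x) = real ((k+N) choose N) * norm w ^ k * (\<Prod>i\<in>I. gk D n k (x i))"
        unfolding f_def by (simp add: norm_mult norm_power del: of_real_prod)
    qed
    also have "\<dots> = real ((k+N) choose N) * norm w ^ k * Jk D n k ^ card I"
      using PP_prod_integral[OF fin] by simp
    finally show ?thesis .
  qed
  have summ2: "summable (\<lambda>k. LINT x|PP I. norm (f k x))"
    unfolding normint
  proof (rule summable_comparison_test'[OF summ])
    fix k
    have "norm w ^ k \<le> 1" using w by (simp add: power_le_one)
    then show "norm (real ((k+N) choose N) * norm w ^ k * Jk D n k ^ card I) \<le> real ((k+N) choose N) * Jk D n k ^ card I"
    proof -
      have "norm w ^ k * Jk D n k ^ card I \<le> 1 * Jk D n k ^ card I"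
        using \<open>norm w ^ k \<le> 1\<close> Jk_nonneg[of D n k] by (intro mult_right_mono) auto
      then show ?thesis using Jk_nonneg[of D n k] by (simp add: abs_mult)
    qed
  qed
  have ae: "AE x in PP I. summable (\<lambda>k. norm (f k x))" using pt by (intro AE_I2) simp
  have eqF: "x \<in> space (PP I) \<Longrightarrow> F x = (\<Sum>k. f k x)" for x using pt by (simp add: sums_iff)
  have "integrable (PP I) (\<lambda>x. \<Sum>k. f k x)" by (rule integrable_suminf[OF fint ae summ2])
  moreover have "integrable (PP I) F \<longleftrightarrow> integrable (PP I) (\<lambda>x. \<Sum>k. f k x)"
    by (rule Bochner_Integration.integrable_cong) (auto simp: eqF)
  ultimately show "integrable (PP I) F" by simp
  have "(LINT x|PP I. F x) = (LINT x|PP I. (\<Sum>k. f k x))" by (rule Bochner_Integration.integral_cong[OF refl eqF])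
  also have "\<dots> = (\<Sum>k. LINT x|PP I. f k x)" by (rule integral_suminf[OF fint ae summ2])
  also have "\<dots> = (\<Sum>k. of_nat ((k+N) choose N) * w^k * complex_of_real (Jk D n k ^ card I))"
  proof -
    have "(LINT x|PP I. f k x) = of_nat ((k+N) choose N) * w^k * complex_of_real (Jk D n k ^ card I)" for k
    proof -
      have "(LINT x|PP I. f k x) = of_nat ((k+N) choose N) * w^k * (LINT x|PP I. complex_of_real (\<Prod>i\<in>I. gk D n k (x i)))"
        unfolding f_def by (rule integral_mult_right_zero)
      also have "(LINT x|PP I. complex_of_real (\<Prod>i\<in>I. gk D n k (x i))) = complex_of_real (Jk D n k ^ card I)"
        by (subst integral_complex_of_real) (simp only: PP_prod_integral[OF fin])
      finally show ?thesis .
    qed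
    then show ?thesis by simp
  qed
  finally show "(LINT x|PP I. F x) = (\<Sum>k. of_nat ((k+N) choose N) * w^k * complex_of_real (Jk D n k ^ card I))" .
qed


lemma binom_poch: "real ((k+N) choose N) = pochhammer (real k + 1) N / fact N"
  by (simp add: binomial_gbinomial gbinomial_pochhammer')

lemma prod_poch: "(\<Prod>l\<in>{0..m}. (t + real l)) = pochhammer t (Suc m)"
  by (simp only: pochhammer_prod atLeastLessThanSuc_atLeastAtMost)

lemma ident:
  assumes D: "D > 0" and s3: "s + 1 \<ge> 3 * D"
  shows "real D ^ s * fact (3*D*n+1) / fact n ^ (3*D) * real ((k + (3*D*n+1)) choose (3*D*n+1)) * Jk D n k ^ (s+1)
       = R_fun s D n (real n + real (k+1) / real D)"
proof -
  define N where "N = 3*D*n+1"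
  define t where "t = real n + real (k+1) / real D"
  have ta: "real (D*n+k+1) / real D = t" unfolding t_def using D by (simp add: field_simps)
  have t0: "t > 0" unfolding t_def using D by (simp add: add_nonneg_pos)
  define P where "P = pochhammer t (Suc n)"
  have P0: "P > 0" unfolding P_def using t0 by (intro pochhammer_pos)
  define Q where "Q = pochhammer (real k + 1) N"
  have J: "Jk D n k = fact n / (real D * P)" unfolding P_def using Jk_closed[OF D] ta by simp
  have num: "(\<Prod>l\<in>{0..3*D*n}. t - real n + real l / real D) = Q / real D ^ N"
  proof -
    have "(\<Prod>l\<in>{0..3*D*n}. t - real n + real l / real D) = (\<Prod>l\<in>{0..3*D*n}. (real k + 1 + real l) / real D)"
      unfolding t_def by (intro prod.cong refl) (simp add: add_divide_distrib)
    also have "\<dots> = (\<Prod>l\<in>{0..3*D*n}. (real k + 1 + real l)) / real D ^ N"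
      by (simp add: prod_dividef N_def)
    also have "(\<Prod>l\<in>{0..3*D*n}. (real k + 1 + real l)) = Q"
      unfolding Q_def N_def using prod_poch[of "real k + 1" "3*D*n"] by (simp add: add_ac)
    finally show ?thesis .
  qed
  have den: "(\<Prod>l\<in>{0..n}. (t + real l) ^ (s+1)) = P ^ (s+1)"
    unfolding P_def by (simp only: prod_power_distrib[symmetric] prod_poch)
  have R: "R_fun s D n t = real D ^ (3*D*n) * fact n ^ (s + 1 - 3*D) * (Q / real D ^ N) / P ^ (s+1)"
    unfolding R_fun_def num den ..
  have fn: "fact n ^ (s+1) = fact n ^ (s + 1 - 3*D) * (fact n ^ (3*D) :: real)"
    using s3 by (simp flip: power_add)
  have DN: "real D ^ N = real D * real D ^ (3*D*n)" unfolding N_def by simp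
  have "real D ^ s * fact N / fact n ^ (3*D) * real ((k + N) choose N) * Jk D n k ^ (s+1)
      = real D ^ s * fact N / fact n ^ (3*D) * (Q / fact N) * (fact n ^ (s+1) / (real D ^ (s+1) * P ^ (s+1)))"
    unfolding binom_poch J Q_def by (simp add: power_divide power_mult_distrib)
  also have "\<dots> = R_fun s D n t"
    unfolding R fn DN using P0 D by (simp add: field_simps)
  finally show ?thesis unfolding N_def t_def .
qed


lemma R_bound:
  assumes D: "D > 0" and s3: "s + 1 \<ge> 3 * D" and tn: "t \<ge> real n" and t1: "t \<ge> 1"
  shows "0 \<le> R_fun s D n t \<and> R_fun s D n t \<le> real D ^ (3*D*n) * fact n ^ (s + 1 - 3*D) * 4 ^ (3*D*n+1) / t^2"
proof -
  define K where "K = real D ^ (3*D*n) * fact n ^ (s + 1 - 3*D)"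
  have K0: "K \<ge> 0" unfolding K_def by simp
  have t0: "t > 0" using t1 by simp
  have fac: "0 \<le> t - real n + real l / real D \<and> t - real n + real l / real D \<le> 4 * t" if "l \<in> {0..3*D*n}" for l
  proof -
    have "real l / real D \<le> real (3*D*n) / real D" using that D by (intro divide_right_mono) (auto simp flip: of_nat_mult)
    also have "\<dots> = 3 * real n" using D by simp
    finally have "real l / real D \<le> 3 * real n" .
    then show ?thesis using tn by simp
  qed
  have num0: "0 \<le> (\<Prod>l\<in>{0..3*D*n}. t - real n + real l / real D)"
    using fac by (intro prod_nonneg) auto
  have num1: "(\<Prod>l\<in>{0..3*D*n}. t - real n + real l / real D) \<le> (4*t) ^ (3*D*n+1)"
  proof -
    have "(\<Prod>l\<in>{0..3*D*n}. t - real n + real l / real D) \<le> (\<Prod>l\<in>{0..3*D*n}. 4 * t)"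
      using fac by (intro prod_mono) auto
    then show ?thesis by simp
  qed
  have den1: "t ^ ((s+1)*(n+1)) \<le> (\<Prod>l\<in>{0..n}. (t + real l) ^ (s+1))"
  proof -
    have "(\<Prod>l\<in>{0..n}. t ^ (s+1)) \<le> (\<Prod>l\<in>{0..n}. (t + real l) ^ (s+1))"
      using t0 by (intro prod_mono conjI power_mono) auto
    moreover have "(\<Prod>l\<in>{0..n}. t ^ (s+1)) = t ^ ((s+1)*(n+1))"
    proof -
      have "(\<Prod>l\<in>{0..n}. t ^ (s+1)) = (t ^ (s+1)) ^ (n+1)" by simp
      then show ?thesis by (simp only: power_mult)
    qed
    ultimately show ?thesis by linarith
  qed
  have tpos: "t ^ ((s+1)*(n+1)) > 0" using t0 by simp
  have exps: "3*D*n+1 + 2 \<le> (s+1)*(n+1)"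
  proof -
    have "3*D*(n+1) \<le> (s+1)*(n+1)" using s3 by (intro mult_right_mono) auto
    then show ?thesis using D by (simp add: algebra_simps)
  qed
  have tpow: "t ^ (3*D*n+1 + 2) \<le> t ^ ((s+1)*(n+1))"
    using t1 exps by (intro power_increasing) auto
  have R: "R_fun s D n t = K * (\<Prod>l\<in>{0..3*D*n}. t - real n + real l / real D) / (\<Prod>l\<in>{0..n}. (t + real l) ^ (s+1))"
    unfolding R_fun_def K_def ..
  have "R_fun s D n t \<le> K * (4*t) ^ (3*D*n+1) / t ^ ((s+1)*(n+1))"
    unfolding R using K0 num0 num1 den1 tpos t0
    by (intro frac_le mult_left_mono mult_nonneg_nonneg) (auto simp del: power_Suc)
  also have "\<dots> \<le> K * (4*t) ^ (3*D*n+1) / t ^ (3*D*n+1 + 2)"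
    using K0 t0 tpow by (intro divide_left_mono mult_nonneg_nonneg mult_pos_pos) auto
  also have "\<dots> = K * 4 ^ (3*D*n+1) / t^2"
    using t0 by (simp add: power_add power_mult_distrib power2_eq_square)
  finally have up: "R_fun s D n t \<le> K * 4 ^ (3*D*n+1) / t^2" .
  have "0 \<le> R_fun s D n t" unfolding R using K0 num0 t0 by (intro divide_nonneg_pos mult_nonneg_nonneg prod_pos) auto
  then show ?thesis using up unfolding K_def by simp
qed


lemma summable_inv_sq: "summable (\<lambda>k::nat. 1 / (real (k+1))^2)"
proof -
  have "summable (\<lambda>k::nat. inverse (real k ^ 2))" by (rule inverse_power_summable) simp
  then have "summable (\<lambda>k::nat. inverse (real (Suc k) ^ 2))" by (subst summable_Suc_iff)
  then show ?thesis by (simp add: inverse_eq_divide)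
qed

lemma summable_R:
  assumes D: "D > 0" and s3: "s + 1 \<ge> 3 * D" and n: "n > 0"
  shows "summable (\<lambda>k. R_fun s D n (real n + real (k+1) / real D))"
proof -
  define B where "B = real D ^ (3*D*n) * fact n ^ (s + 1 - 3*D) * 4 ^ (3*D*n+1)"
  have B0: "B \<ge> 0" unfolding B_def by simp
  show ?thesis
  proof (rule summable_comparison_test'[OF summable_mult[OF summable_inv_sq, of "B * real D ^ 2"]])
    fix k :: nat
    let ?t = "real n + real (k+1) / real D"
    have t1: "?t \<ge> 1" using n by (simp add: add_increasing2)
    have tn: "?t \<ge> real n" by simp
    have tk: "?t \<ge> real (k+1) / real D" by simp
    have kpos: "real (k+1) / real D > 0" using D by simp
    note Rb = R_bound[OF D s3 tn t1]
    have "norm (R_fun s D n ?t) = R_fun s D n ?t" using Rb by simp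
    also have "\<dots> \<le> B / ?t^2" using Rb unfolding B_def by simp
    also have "\<dots> \<le> B / (real (k+1) / real D)^2"
      using B0 kpos tk D t1 by (intro divide_left_mono power_mono mult_pos_pos) auto
    also have "\<dots> = B * real D ^ 2 * (1 / (real (k+1))^2)"
      using D by (simp add: power_divide)
    finally show "norm (R_fun s D n ?t) \<le> B * real D ^ 2 * (1 / (real (k+1))^2)" .
  qed
qed

lemma summable_main:
  assumes D: "D > 0" and s3: "s + 1 \<ge> 3 * D" and n: "n > 0"
  shows "summable (\<lambda>k. real ((k + (3*D*n+1)) choose (3*D*n+1)) * Jk D n k ^ (s+1))"
proof -
  define K0 where "K0 = real D ^ s * fact (3*D*n+1) / fact n ^ (3*D)"
  have K0: "K0 > 0" unfolding K0_def using D
    by (intro divide_pos_pos mult_pos_pos fact_gt_zero zero_less_power) auto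
  have sm: "summable (\<lambda>k. R_fun s D n (real n + real (k+1) / real D) / K0)"
    by (intro summable_divide summable_R D s3 n)
  have e: "R_fun s D n (real n + real (k+1) / real D) / K0 = real ((k + (3*D*n+1)) choose (3*D*n+1)) * Jk D n k ^ (s+1)" for k
    using ident[OF D s3, of n k] K0 unfolding K0_def[symmetric] by (simp add: field_simps)
  show ?thesis using sm by (simp only: e)
qed


lemma prim_pow_eq_1:
  fixes \<xi> :: complex
  assumes D: "D > 0" and xD: "\<xi> ^ D = 1" and prim: "\<forall>k. 0 < k \<and> k < D \<longrightarrow> \<xi> ^ k \<noteq> 1"
  shows "\<xi> ^ e = 1 \<longleftrightarrow> D dvd e"
proof
  assume h: "\<xi> ^ e = 1"
  have "\<xi> ^ e = \<xi> ^ (e mod D) * (\<xi> ^ D) ^ (e div D)"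
    by (simp add: power_mult[symmetric] power_add[symmetric])
  then have "\<xi> ^ (e mod D) = 1" using h xD by simp
  moreover have "e mod D < D" using D by simp
  ultimately have "e mod D = 0" using prim by (metis gr0I)
  then show "D dvd e" by (simp add: mod_eq_0_iff_dvd)
next
  assume "D dvd e"
  then obtain q where "e = D * q" by blast
  then show "\<xi> ^ e = 1" by (simp add: power_mult xD)
qed

lemma norm_root1:
  fixes \<xi> :: complex
  assumes D: "D > 0" and xD: "\<xi> ^ D = 1"
  shows "norm \<xi> = 1"
proof -
  have e: "norm \<xi> ^ D = 1" using xD by (metis norm_one norm_power)
  show ?thesis
  proof (rule ccontr)
    assume "norm \<xi> \<noteq> 1"
    then consider "norm \<xi> < 1" | "norm \<xi> > 1" by linarith
    then show False
    proof cases
      case 1 then have "norm \<xi> ^ D < 1 ^ D" using D by (intro power_strict_mono) auto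
      then show False using e by simp
    next
      case 2 then have "norm \<xi> ^ D > 1" using D by (intro one_less_power) auto
      then show False using e by simp
    qed
  qed
qed

lemma root_sum:
  fixes c :: complex
  assumes D: "D > 0" and cD: "c ^ D = 1"
  shows "(\<Sum>m=1..D. c ^ m) = (if c = 1 then of_nat D else 0)"
proof -
  have "(\<Sum>m=1..D. c ^ m) = (\<Sum>m<D. c ^ Suc m)"
    by (simp add: sum.atLeast1_atMost_eq)
  also have "\<dots> = c * (\<Sum>m<D. c ^ m)" by (simp add: sum_distrib_left)
  also have "\<dots> = (if c = 1 then of_nat D else 0)"
    using cD by (simp add: sum_gp_strict)
  finally show ?thesis .
qed

lemma root_cond:
  fixes \<xi> :: complex
  assumes D: "D > 0" and xD: "\<xi> ^ D = 1" and prim: "\<forall>k. 0 < k \<and> k < D \<longrightarrow> \<xi> ^ k \<noteq> 1"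
    and j: "j \<in> {1..D}"
  shows "\<xi> ^ (k+1) * inverse \<xi> ^ j = 1 \<longleftrightarrow> D dvd (k + (D + 1 - j))"
proof -
  have x0: "\<xi> \<noteq> 0"
  proof
    assume "\<xi> = 0"
    then have "\<xi> ^ D = 0" using D by simp
    with xD show False by simp
  qed
  have nz: "\<xi> ^ j \<noteq> 0" using x0 by simp
  have "\<xi> ^ (k+1) * inverse \<xi> ^ j = 1 \<longleftrightarrow> \<xi> ^ (k+1) = \<xi> ^ j"
    using nz by (simp add: power_inverse divide_inverse[symmetric] del: power_Suc)
  also have "\<dots> \<longleftrightarrow> \<xi> ^ (k+1) * \<xi> ^ (D - j) = \<xi> ^ j * \<xi> ^ (D - j)"
    using x0 by simp
  also have "\<xi> ^ j * \<xi> ^ (D - j) = 1" using j xD by (simp flip: power_add)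
  also have "\<xi> ^ (k+1) * \<xi> ^ (D - j) = \<xi> ^ (k + (D + 1 - j))"
  proof -
    have "k + 1 + (D - j) = k + (D + 1 - j)" using j by (simp; arith)
    then show ?thesis by (simp only: power_add[symmetric])
  qed
  also have "\<dots> = 1 \<longleftrightarrow> D dvd (k + (D + 1 - j))" by (rule prim_pow_eq_1[OF D xD prim])
  finally show ?thesis .
qed

lemma root_range:
  fixes D j k :: nat
  assumes D: "D > 0" and j: "j \<in> {1..D}"
  shows "D dvd (k + (D + 1 - j)) \<longleftrightarrow> k \<in> range (\<lambda>q. D*q + (j-1))"
proof
  assume "D dvd (k + (D + 1 - j))"
  then obtain c where c: "k + (D + 1 - j) = D * c" by blast
  have "c \<noteq> 0"
  proof
    assume c0: "c = 0"
    have "k + (D + 1 - j) = 0" using c unfolding c0 by simp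
    with j show False by auto
  qed
  then obtain c' where c': "c = Suc c'" by (cases c) auto
  have e1: "k + (D + 1 - j) = D + D * c'" using c unfolding c' by simp
  define X where "X = D * c'"
  have "k + (D + 1 - j) = D + X" using e1 unfolding X_def .
  then have "k = X + (j - 1)" using j by auto
  then have "k = D * c' + (j - 1)" unfolding X_def .
  then show "k \<in> range (\<lambda>q. D*q + (j-1))" by blast
next
  assume "k \<in> range (\<lambda>q. D*q + (j-1))"
  then obtain q where "k = D*q + (j-1)" by blast
  then have "k + (D + 1 - j) = D * (q+1)" using j by (simp add: algebra_simps)
  then show "D dvd (k + (D + 1 - j))" by simp
qed



lemma R_zero:
  assumes D: "D > 0" and m: "1 \<le> m" "m < n" and j: "j \<in> {1..D}"
  shows "R_fun s D n (real m + real j / real D) = 0"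
proof -
  define l where "l = D * (n - m) - j"
  have Dnm: "D * (n - m) \<ge> D" using m D by simp
  have "j \<le> D" using j by simp
  then have jl: "j \<le> D * (n - m)" using Dnm by linarith
  have l_in: "l \<in> {0..3*D*n}"
  proof -
    have "D * (n - m) \<le> D * n" by (intro mult_left_mono) auto
    moreover have "D * n \<le> 3 * D * n" by simp
    ultimately have "D * (n - m) - j \<le> 3 * D * n" by linarith
    then show ?thesis unfolding l_def by simp
  qed
  have rl: "real l = real D * (real n - real m) - real j"
    unfolding l_def using jl m by (simp add: of_nat_diff)
  have "real m + real j / real D - real n + real l / real D = 0"
    unfolding rl using D by (simp add: field_simps)
  then have "(\<Prod>l\<in>{0..3*D*n}. real m + real j / real D - real n + real l / real D) = 0"
    using l_in by (intro prod_zero) auto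
  then show ?thesis unfolding R_fun_def by simp
qed

lemma rlin_from_shift:
  assumes D: "D > 0" and n: "n > 0" and j: "j \<in> {1..D}"
    and h: "(\<lambda>q. R_fun s D n (real (q+n) + real j / real D)) sums X"
  shows "r_lin s D n j = X"
proof -
  let ?f = "\<lambda>m. R_fun s D n (real (Suc m) + real j / real D)"
  have sm: "strict_mono (\<lambda>q::nat. q + (n-1))" by (rule strict_monoI) simp
  have z: "?f m = 0" if "m \<notin> range (\<lambda>q::nat. q + (n-1))" for m
  proof -
    have "m < n - 1"
    proof (rule ccontr)
      assume "\<not> m < n - 1"
      then have "m = (m - (n-1)) + (n-1)" by simp
      then show False using that by blast
    qed
    then show ?thesis using R_zero[OF D _ _ j, of "Suc m" n s] by simp
  qed
  have "(\<lambda>q. ?f (q + (n-1))) = (\<lambda>q. R_fun s D n (real (q+n) + real j / real D))"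
    using n by (simp add: Suc_diff_le)
  with h have "(\<lambda>q. ?f (q + (n-1))) sums X" by (simp only:)
  moreover have "(\<lambda>q. ?f (q + (n-1))) sums X \<longleftrightarrow> ?f sums X"
    by (rule sums_mono_reindex[OF sm]) (rule z)
  ultimately have "?f sums X" by simp
  then show ?thesis unfolding r_lin_def by (simp add: sums_iff)
qed


lemma r_star_series:
  fixes \<xi> :: complex
  assumes D: "D > 0" and s3: "s + 1 \<ge> 3 * D" and n: "n > 0" and xD: "\<xi> ^ D = 1"
  shows "r_star s D n \<xi> m = \<xi>^m * (\<Sum>k. of_nat ((k + (3*D*n+1)) choose (3*D*n+1)) * (\<xi>^m)^k * complex_of_real (Jk D n k ^ (s+1)))"
proof -
  have nx: "norm (\<xi>^m) \<le> 1" using norm_root1[OF D xD] by (simp add: norm_power)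
  have e: "3*D*n+2 = Suc (3*D*n+1)" by simp
  have c: "card {..s} = s + 1" by simp
  have sA: "summable (\<lambda>k. real ((k + (3*D*n+1)) choose (3*D*n+1)) * Jk D n k ^ card {..s})"
    unfolding c by (rule summable_main[OF D s3 n])
  show ?thesis
    unfolding r_star_def e
    using series_integral(2)[OF _ _ n nx sA] unfolding c by simp
qed


lemma part1:
  fixes \<xi> :: complex
  assumes D: "D > 0" and s0: "s > 0" and s3: "s + 1 \<ge> 3 * D" and n: "n > 0"
    and xD: "\<xi> ^ D = 1" and prim: "\<forall>k. 0 < k \<and> k < D \<longrightarrow> \<xi> ^ k \<noteq> 1"
    and j: "j \<in> {1..D}"
  shows "complex_of_real (r_lin s D n j) =
        complex_of_real (real D ^ (s - 1) * fact (3*D*n+1) / fact n ^ (3*D))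
        * (\<Sum>m=1..D. inverse \<xi> ^ (m*j) * r_star s D n \<xi> m)"
proof -
  define N where "N = 3*D*n+1"
  define A where "A k = real ((k+N) choose N) * Jk D n k ^ (s+1)" for k
  define c where "c = real D ^ (s - 1) * fact (3*D*n+1) / fact n ^ (3*D)"
  define cond where "cond k \<longleftrightarrow> D dvd (k + (D+1-j))" for k
  define B where "B k = (if cond k then real D else 0) * A k" for k
  have sA: "summable A" unfolding A_def N_def by (rule summable_main[OF D s3 n])
  have A0: "A k \<ge> 0" for k unfolding A_def using Jk_nonneg by simp
  have sB: "summable B"
  proof (rule summable_comparison_test'[OF summable_mult[OF sA, of "real D"]])
    fix k show "norm (B k) \<le> real D * A k" unfolding B_def using A0[of k] by auto
  qed
  have nx: "norm \<xi> = 1" by (rule norm_root1[OF D xD])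
  define u where "u m k = of_nat ((k+N) choose N) * (\<xi>^m)^k * complex_of_real (Jk D n k ^ (s+1))" for m k
  have rs: "r_star s D n \<xi> m = \<xi>^m * (\<Sum>k. u m k)" for m
    unfolding u_def N_def by (rule r_star_series[OF D s3 n xD])
  have nu: "norm (u m k) = A k" for m k
    unfolding u_def A_def using nx Jk_nonneg[of D n k] by (simp add: norm_mult norm_power)
  have su: "summable (u m)" for m
    by (rule summable_norm_cancel) (simp add: nu sA)
  have "(\<Sum>m=1..D. inverse \<xi> ^ (m*j) * r_star s D n \<xi> m) = (\<Sum>m=1..D. \<Sum>k. inverse \<xi> ^ (m*j) * \<xi>^m * u m k)"
  proof (intro sum.cong refl)
    fix m
    show "inverse \<xi> ^ (m*j) * r_star s D n \<xi> m = (\<Sum>k. inverse \<xi> ^ (m*j) * \<xi>^m * u m k)"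
      unfolding rs using suminf_mult[OF su[of m], of "inverse \<xi> ^ (m*j) * \<xi>^m"] by (simp add: mult_ac)
  qed
  also have "\<dots> = (\<Sum>k. \<Sum>m=1..D. inverse \<xi> ^ (m*j) * \<xi>^m * u m k)"
    by (rule suminf_sum[symmetric]) (intro summable_mult su)
  also have "\<dots> = (\<Sum>k. complex_of_real (B k))"
  proof (intro suminf_cong)
    fix k
    define cc where "cc = \<xi>^(k+1) * inverse \<xi> ^ j"
    have t: "inverse \<xi> ^ (m*j) * \<xi>^m * u m k = cc ^ m * complex_of_real (A k)" for m
      unfolding u_def A_def cc_def
      by (simp add: power_mult_distrib power_mult[symmetric] power_add mult_ac)
    have ccD: "cc ^ D = 1" unfolding cc_def
      by (simp add: power_mult_distrib power_mult[symmetric] mult.commute[of _ D]) (simp add: power_mult xD power_inverse)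
    have cc1: "cc = 1 \<longleftrightarrow> cond k" unfolding cc_def cond_def by (rule root_cond[OF D xD prim j])
    have "(\<Sum>m=1..D. inverse \<xi> ^ (m*j) * \<xi>^m * u m k) = (\<Sum>m=1..D. cc ^ m) * complex_of_real (A k)"
      unfolding t by (simp add: sum_distrib_right)
    also have "\<dots> = complex_of_real (B k)"
      unfolding root_sum[OF D ccD] B_def cc1 by simp
    finally show "(\<Sum>m=1..D. inverse \<xi> ^ (m*j) * \<xi>^m * u m k) = complex_of_real (B k)" .
  qed
  also have "\<dots> = complex_of_real (suminf B)"
  proof -
    have "(\<lambda>k. complex_of_real (B k)) sums complex_of_real (suminf B)"
      by (rule sums_of_real[OF summable_sums[OF sB]])
    then show ?thesis by (simp add: sums_iff)
  qed
  finally have RHS: "(\<Sum>m=1..D. inverse \<xi> ^ (m*j) * r_star s D n \<xi> m) = complex_of_real (suminf B)" .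
  define g where "g q = D*q + (j-1)" for q
  have smg: "strict_mono g" unfolding g_def using D by (intro strict_monoI) simp
  have zg: "(\<lambda>k. c * B k) k = 0" if "k \<notin> range g" for k
  proof -
    have "\<not> cond k" using that root_range[OF D j, of k] unfolding cond_def g_def by simp
    then show ?thesis unfolding B_def by simp
  qed
  have "(\<lambda>k. c * B k) sums (c * suminf B)" by (rule sums_mult[OF summable_sums[OF sB]])
  then have "(\<lambda>q. c * B (g q)) sums (c * suminf B)"
    using sums_mono_reindex[OF smg, of "\<lambda>k. c * B k"] zg by simp
  moreover have "c * B (g q) = R_fun s D n (real (q+n) + real j / real D)" for q
  proof -
    have cg: "cond (g q)" unfolding cond_def g_def using root_range[OF D j, of "D*q + (j-1)"] by auto
    have "c * B (g q) = real D ^ s * fact (3*D*n+1) / fact n ^ (3*D) * real ((g q + (3*D*n+1)) choose (3*D*n+1)) * Jk D n (g q) ^ (s+1)"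
    proof -
      have "real D ^ (s - 1) * real D = real D ^ s" using s0 by (simp flip: power_Suc2)
      then show ?thesis unfolding B_def A_def c_def N_def using cg by (simp add: mult_ac)
    qed
    also have "\<dots> = R_fun s D n (real n + real (g q + 1) / real D)" by (rule ident[OF D s3])
    also have "real n + real (g q + 1) / real D = real (q+n) + real j / real D"
      unfolding g_def using D j by (simp add: field_simps)
    finally show ?thesis .
  qed
  ultimately have "(\<lambda>q. R_fun s D n (real (q+n) + real j / real D)) sums (c * suminf B)" by simp
  then have "r_lin s D n j = c * suminf B" by (rule rlin_from_shift[OF D n j])
  then show ?thesis unfolding RHS c_def[symmetric] by simp
qed


lemma fubini_0:
  fixes F :: "(nat \<Rightarrow> real) \<Rightarrow> complex"
  assumes Fint: "integrable (PP {..s}) F"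
    and Floc: "\<And>x y. (\<And>i. i \<in> {..s} \<Longrightarrow> x i = y i) \<Longrightarrow> F x = F y"
  defines "h \<equiv> \<lambda>t. LINT y|PP {1..s}. F (y(0:=t))"
  shows "integrable M1 h" and "(LINT x|PP {..s}. F x) = (LINT t|M1. h t)"
proof -
  have U: "{..s} = {0} \<union> {1..s}" by auto
  interpret psf: product_sigma_finite "\<lambda>i::nat. M1" by (rule M1_psf)
  interpret I: finite_product_sigma_finite "\<lambda>i::nat. M1" "{0::nat}" by standard simp
  interpret J: finite_product_sigma_finite "\<lambda>i::nat. M1" "{1..s}" by standard simp
  interpret P: pair_sigma_finite "PP {0}" "PP {1..s}" ..
  have IJ: "{0::nat} \<inter> {1..s} = {}" by auto
  have Fint': "integrable (PP ({0} \<union> {1..s})) F" using Fint U by simp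
  have f_borel: "F \<in> borel_measurable (PP ({0} \<union> {1..s}))" using Fint' by auto
  have f_int: "integrable (PP {0} \<Otimes>\<^sub>M PP {1..s}) (\<lambda>x. F (merge {0} {1..s} x))"
  proof (rule integrable_distr[OF measurable_merge])
    have dm: "distr (PP {0} \<Otimes>\<^sub>M PP {1..s}) (PP ({0} \<union> {1..s})) (merge {0} {1..s}) = PP ({0} \<union> {1..s})"
      by (rule psf.distr_merge[OF IJ]) auto
    show "integrable (distr (PP {0} \<Otimes>\<^sub>M PP {1..s}) (PP ({0} \<union> {1..s})) (merge {0} {1..s})) F"
      unfolding dm by (rule Fint')
  qed
  have inner_int: "integrable (PP {0}) (\<lambda>x. LINT y|PP {1..s}. F (merge {0} {1..s} (x,y)))"
    by (rule P.integrable_fst'[OF f_int])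
  have eq: "(LINT y|PP {1..s}. F (merge {0} {1..s} (x,y))) = h (x 0)" for x
    unfolding h_def
  proof (intro Bochner_Integration.integral_cong refl Floc)
    fix y i assume "i \<in> {..s}"
    then show "merge {0} {1..s} (x, y) i = (y(0 := x 0)) i" by (auto simp: merge_def)
  qed
  have int0: "integrable (PP {0}) (\<lambda>x. h (x 0))" using inner_int unfolding eq .
  have hb0: "(\<lambda>x. h (x 0)) \<in> borel_measurable (PP {0})" using int0 by auto
  have emb: "(\<lambda>t. \<lambda>i\<in>{0::nat}. t) \<in> measurable M1 (PP {0})"
    by (rule measurable_restrict) simp
  have hb: "h \<in> borel_measurable M1"
  proof -
    have "(\<lambda>t. (\<lambda>x. h (x 0)) ((\<lambda>i\<in>{0::nat}. t))) \<in> borel_measurable M1"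
      by (rule measurable_comp[OF emb hb0, unfolded comp_def])
    then show ?thesis by simp
  qed
  have ds: "distr (PP {0}) M1 (\<lambda>x. x 0) = M1"
    by (rule psf.distr_singleton)
  have "integrable (distr (PP {0}) M1 (\<lambda>x. x 0)) h"
    by (subst integrable_distr_eq) (auto intro: int0 hb measurable_component_singleton)
  then show "integrable M1 h" unfolding ds .
  have "(LINT x|PP {..s}. F x) = (LINT x|PP ({0} \<union> {1..s}). F x)" using U by simp
  also have "\<dots> = (LINT x|PP {0}. LINT y|PP {1..s}. F (merge {0} {1..s} (x,y)))"
    by (rule psf.product_integral_fold[OF IJ _ _ Fint']) auto
  also have "\<dots> = (LINT x|PP {0}. h (x 0))" unfolding eq ..
  also have "\<dots> = (LINT t|M1. h t)" by (rule psf.product_integral_singleton[OF hb])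
  finally show "(LINT x|PP {..s}. F x) = (LINT t|M1. h t)" .
qed


lemma M1_has_integral:
  fixes h :: "real \<Rightarrow> complex"
  assumes "integrable M1 h"
  shows "(h has_integral (LINT t|M1. h t)) {0..1}"
proof -
  have si: "set_integrable lborel {0..1} h"
    unfolding set_integrable_def using assms by (subst (asm) integrable_restrict_space) auto
  have "(LINT t|M1. h t) = (LINT x:{0..1}|lborel. h x)"
    unfolding set_lebesgue_integral_def by (subst integral_restrict_space) auto
  also have "\<dots> = integral {0..1} h" by (rule set_borel_integral_eq_integral(2)[OF si])
  finally show ?thesis using set_borel_integral_eq_integral(1)[OF si] by auto
qed

lemma part2:
  fixes \<xi> :: complex
  assumes D: "D > 0" and s3: "s + 1 \<ge> 3 * D" and n: "n > 0" and xD: "\<xi> ^ D = 1"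
  shows "r_star s D n \<xi> m = r_star_contour s D n \<xi> m"
proof -
  define w where "w = \<xi> ^ m"
  have wD: "w ^ D = 1" unfolding w_def using xD by (simp flip: power_mult add: mult.commute[of m] power_mult)
  have nw: "norm w \<le> 1" unfolding w_def using norm_root1[OF D xD] by (simp add: norm_power)
  define E where "E = 3*D*n+2"
  define F where "F x = complex_of_real (weight D n {..s} x) / (1 - w * complex_of_real (\<Prod>i\<in>{..s}. x i)) ^ E" for x
  have c: "card {..s} = s + 1" by simp
  have sA: "summable (\<lambda>k. real ((k + (3*D*n+1)) choose (3*D*n+1)) * Jk D n k ^ card {..s})"
    unfolding c by (rule summable_main[OF D s3 n])
  have Fint: "integrable (PP {..s}) F"
  proof -
    have e: "E = Suc (3*D*n+1)" unfolding E_def by simp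
    show ?thesis unfolding F_def e by (rule series_integral(1)[OF _ _ n nw sA]) auto
  qed
  have Floc: "F x = F y" if "\<And>i. i \<in> {..s} \<Longrightarrow> x i = y i" for x y
  proof -
    have "weight D n {..s} x = weight D n {..s} y" unfolding weight_def using that by (intro prod.cong) auto
    moreover have "(\<Prod>i\<in>{..s}. x i) = (\<Prod>i\<in>{..s}. y i)" using that by (intro prod.cong) auto
    ultimately show ?thesis unfolding F_def by simp
  qed
  define h where "h t = (LINT y|PP {1..s}. F (y(0:=t)))" for t
  have hint: "integrable M1 h" unfolding h_def by (rule fubini_0(1)[OF Fint Floc])
  have Fh: "(LINT x|PP {..s}. F x) = (LINT t|M1. h t)" unfolding h_def by (rule fubini_0(2)[OF Fint Floc])
  have rs: "r_star s D n \<xi> m = w * (LINT x|PP {..s}. F x)"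
    unfolding r_star_def F_def w_def E_def ..
  define G where "G z = (LINT x|PP {1..s}. z ^ (D*n) * (1 - z ^ D) ^ n * complex_of_real (weight D n {1..s} x)
        / (1 - z * complex_of_real (\<Prod>i\<in>{1..s}. x i)) ^ (3*D*n+2))" for z
  have rc: "r_star_contour s D n \<xi> m = contour_integral (linepath 0 w) G"
    unfolding r_star_contour_def G_def w_def ..
  have Gh: "G (linepath 0 w t) * (w - 0) = h t * w" for t
  proof -
    have lp: "linepath 0 w t = complex_of_real t * w" by (simp add: linepath_def scaleR_conv_of_real)
    have "G (complex_of_real t * w) = h t"
      unfolding G_def h_def
    proof (intro Bochner_Integration.integral_cong refl)
      fix x :: "nat \<Rightarrow> real"
      have ins: "{..s} = insert 0 {1..s}" by auto
      have wt: "weight D n {..s} (x(0:=t)) = t^(D*n) * (1 - t^D)^n * weight D n {1..s} x"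
      proof -
        have "weight D n {1..s} (x(0:=t)) = weight D n {1..s} x" unfolding weight_def by (intro prod.cong) auto
        then show ?thesis unfolding ins weight_def by simp
      qed
      have pt: "(\<Prod>i\<in>{..s}. (x(0:=t)) i) = t * (\<Prod>i\<in>{1..s}. x i)"
      proof -
        have "(\<Prod>i\<in>{1..s}. (x(0:=t)) i) = (\<Prod>i\<in>{1..s}. x i)" by (intro prod.cong) auto
        then show ?thesis unfolding ins by simp
      qed
      have w1: "w ^ (D*n) = 1" by (simp add: power_mult wD)
      have w2: "(complex_of_real t * w) ^ D = complex_of_real (t ^ D)" by (simp add: power_mult_distrib wD)
      have w3: "(complex_of_real t * w) ^ (D*n) = complex_of_real (t ^ (D*n))" by (simp add: power_mult_distrib w1)
      show "(complex_of_real t * w) ^ (D*n) * (1 - (complex_of_real t * w) ^ D) ^ n * complex_of_real (weight D n {1..s} x)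
        / (1 - (complex_of_real t * w) * complex_of_real (\<Prod>i\<in>{1..s}. x i)) ^ (3*D*n+2) = F (x(0:=t))"
        unfolding F_def wt pt w2 w3 E_def by (simp add: mult_ac)
    qed
    then show ?thesis unfolding lp by simp
  qed
  have "((\<lambda>t. h t * w) has_integral (LINT t|M1. h t) * w) {0..1}"
    by (rule has_integral_mult_left[OF M1_has_integral[OF hint]])
  then have "((\<lambda>t. G (linepath 0 w t) * (w - 0)) has_integral (LINT t|M1. h t) * w) {0..1}"
    by (rule has_integral_eq[rotated]) (rule Gh[symmetric])
  then have "(G has_contour_integral (LINT t|M1. h t) * w) (linepath 0 w)"
    by (simp only: has_contour_integral_linepath)
  then have "contour_integral (linepath 0 w) G = (LINT t|M1. h t) * w"
    by (rule contour_integral_unique)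
  then show ?thesis unfolding rs rc Fh by (simp add: mult.commute)
qed

theorem theorem1:
  fixes s D n :: nat and \<xi> :: complex
  assumes "D > 0" and "s > 0" and "s + 1 \<ge> 3 * D"
    and "n > 0" and "even n"
    and "\<xi> ^ D = 1" and "\<forall>k. 0 < k \<and> k < D \<longrightarrow> \<xi> ^ k \<noteq> 1"
  shows "\<forall>j\<in>{1..D}.
      complex_of_real (r_lin s D n j) =
        complex_of_real (real D ^ (s - 1) * fact (3*D*n+1) / fact n ^ (3*D))
        * (\<Sum>m=1..D. inverse \<xi> ^ (m*j) * r_star s D n \<xi> m)
    \<and> (\<forall>m\<in>{1..D}. r_star s D n \<xi> m = r_star_contour s D n \<xi> m)"
  using part1[OF assms(1,2,3,4,6,7)] part2[OF assms(1,3,4,6)] by blast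

end
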